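(* Consider the following model. A principal P and an agent A interact over two periods $t\in\{1,2\}$. States $\omega_t\in\{0,1\}$ satisfy $\Pr[\omega_1=1]=\mu_0\in(0,1)$ and $\Pr[\omega_2=\omega\mid\omega_1=\omega]=\rho\in(1/2,1)$. In each period A chooses $e_t\in\{0,1\}$; if $e_t=1$ he observes $\omega_t$, if $e_t=0$ he observes $\omega_t$ with probability $\pi\in(0,1)$ and nothing otherwise. A reports $r_t\in\{\varnothing,\omega_t\}$ if he observed $\omega_t$, else $r_t=\varnothing$. P chooses $x$ at the end of period 2. Payoffs: P gets $\mathbb{1}[x=\omega_2]-k(e_1+e_2)$, A gets $x-c(e_1+e_2)$, $c,k>0$. Let $\kappa=k/(1-\pi)$, $\gamma=c/(1-\pi)$, $\mu_2(\varnothing)=\rho\mu_0+(1-\rho)(1-\mu_0)$, and assume $\kappa\in(1-\rho,\min\{\mu_2(\varnothing),1-\mu_2(\varnothing)\}]$ and $\gamma\le1-\rho$. Consider the mechanism with $\sigma_1=0$, $\sigma_2(r_1)=\mathbb{1}[r_1=\varnothing]$, and $\hat x(r_1,1)=1$, $\hat x(r_1,0)=0$ for all $r_1$, $\hat x(1,\varnothing)=1$, $\hat x(0,\varnothing)=0$, $\hat x(\varnothing,\varnothing)=0$. Consider A's deviation strategy: test in period 1; report $r_1=1$ if $\omega_1=1$ and $r_1=\varnothing$ otherwise; if $\omega_1=1$, do not test in period 2 and report a freely observed $\omega_2$ if and only if $\omega_2=1$; if $\omega_1=0$, test again in period 2 and report the result. Then this deviation gives A a strictly higher expected payoff than his best strategy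 among those that do not test in period 1 if and only if $$\gamma<\bar\gamma':=\frac{\mu_0(1-\rho)}{1-\mu_0(1-\pi)}.$$
   Context: The mechanism described is the baseline (first-best, efficient-assignment) mechanism for this range of $\kappa$, modified so that no report after a requested test yields assignment $0$. A best-responds to the committed mechanism. *)

theory Defs
  imports Complex_Main
begin

text \<open>States \<omega>_t are booleans (True = 1, False = 0). A period-t signal/report is a
  bool option (None = nothing observed / empty report \<open>\<emptyset>\<close>).\<close>

text \<open>Pure strategy of A: (e_1, report rule in period 1 as a function of the period-1
  signal, period-2 effort as a function of the period-1 signal, period-2 report rule
  as a function of both signals).\<close>
type_synonym strategy =
  "bool \<times> (bool option \<Rightarrow> bool option) \<times> (bool option \<Rightarrow> bool) \<times>
   (bool option \<Rightarrow> bool option \<Rightarrow> bool option)"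

definition st_e1 :: "strategy \<Rightarrow> bool" where "st_e1 s = fst s"
definition st_r1 :: "strategy \<Rightarrow> bool option \<Rightarrow> bool option" where "st_r1 s = fst (snd s)"
definition st_e2 :: "strategy \<Rightarrow> bool option \<Rightarrow> bool" where "st_e2 s = fst (snd (snd s))"
definition st_r2 :: "strategy \<Rightarrow> bool option \<Rightarrow> bool option \<Rightarrow> bool option"
  where "st_r2 s = snd (snd (snd s))"

definition feasible_report :: "bool option \<Rightarrow> bool option \<Rightarrow> bool" where
  "feasible_report sg r \<longleftrightarrow> r = None \<or> r = sg"

definition feasible :: "strategy \<Rightarrow> bool" where
  "feasible s \<longleftrightarrow> (\<forall>sg. feasible_report sg (st_r1 s sg)) \<and>
                   (\<forall>sg1 sg2. feasible_report sg2 (st_r2 s sg1 sg2))"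

definition ind :: "bool \<Rightarrow> real" where "ind b = (if b then 1 else 0)"

definition prior :: "real \<Rightarrow> bool \<Rightarrow> real" where
  "prior mu0 w = (if w then mu0 else 1 - mu0)"

definition trans :: "real \<Rightarrow> bool \<Rightarrow> bool \<Rightarrow> real" where
  "trans rho w w' = (if w' = w then rho else 1 - rho)"

definition obsp :: "real \<Rightarrow> bool \<Rightarrow> bool \<Rightarrow> real" where
  "obsp pp e ob = (if e then (if ob then 1 else 0) else (if ob then pp else 1 - pp))"

definition signal :: "bool \<Rightarrow> bool \<Rightarrow> bool option" where
  "signal ob w = (if ob then Some w else None)"

definition xhat :: "bool option \<Rightarrow> bool option \<Rightarrow> real" where
  "xhat r1 r2 = (case r2 of Some b \<Rightarrow> ind b | None \<Rightarrow> ind (r1 = Some True))"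

definition payoffA :: "real \<Rightarrow> real \<Rightarrow> real \<Rightarrow> real \<Rightarrow> strategy \<Rightarrow> real" where
  "payoffA mu0 rho pp c s =
     (\<Sum>w1\<in>UNIV. \<Sum>w2\<in>UNIV. \<Sum>ob1\<in>UNIV. \<Sum>ob2\<in>UNIV.
        (let sg1 = signal ob1 w1; e2 = st_e2 s sg1; sg2 = signal ob2 w2 in
          prior mu0 w1 * trans rho w1 w2 * obsp pp (st_e1 s) ob1 * obsp pp e2 ob2 *
          (xhat (st_r1 s sg1) (st_r2 s sg1 sg2) - c * (ind (st_e1 s) + ind e2))))"

definition deviation :: strategy where
  "deviation = (True,
     (\<lambda>sg. if sg = Some True then Some True else None),
     (\<lambda>sg. sg = Some False),
     (\<lambda>sg1 sg2. if sg1 = Some True then (if sg2 = Some True then Some True else None)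
                else sg2))"

end

theory Submission imports Defs begin

definition U :: "real \<Rightarrow> bool option \<Rightarrow> bool option \<Rightarrow> bool \<Rightarrow> real" where
  "U c sg1 sg2 e2 = (if sg1 = Some True then 1 else ind (sg2 = Some True)) - c * ind e2"

definition bnd :: "real \<Rightarrow> real \<Rightarrow> real \<Rightarrow> real \<Rightarrow> strategy \<Rightarrow> real" where
  "bnd mu0 rho pp c s =
     (\<Sum>w1\<in>UNIV. \<Sum>w2\<in>UNIV. \<Sum>ob1\<in>UNIV. \<Sum>ob2\<in>UNIV.
        (let sg1 = signal ob1 w1; e2 = st_e2 s sg1; sg2 = signal ob2 w2 in
          prior mu0 w1 * trans rho w1 w2 * obsp pp (st_e1 s) ob1 * obsp pp e2 ob2 *
          U c sg1 sg2 e2))"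

lemma xhat_le:
  assumes "feasible s"
  shows "xhat (st_r1 s sg1) (st_r2 s sg1 sg2) \<le> (if sg1 = Some True then 1 else ind (sg2 = Some True))"
proof -
  have a: "st_r1 s sg1 = None \<or> st_r1 s sg1 = sg1" and b: "st_r2 s sg1 sg2 = None \<or> st_r2 s sg1 sg2 = sg2"
    using assms unfolding feasible_def feasible_report_def by auto
  have g: "xhat r1 r2 \<le> (if sg1 = Some True then 1 else ind (sg2 = Some True))"
    if "r1 = None \<or> r1 = sg1" "r2 = None \<or> r2 = sg2" for r1 r2
    using that by (cases sg1; cases sg2; auto simp: xhat_def ind_def)
  show ?thesis using g[OF a b] .
qed

lemma payoff_le_bnd:
  assumes "feasible s" "\<not> st_e1 s" "0 \<le> mu0" "mu0 \<le> 1" "0 \<le> rho" "rho \<le> 1" "0 \<le> pp" "pp \<le> 1"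
  shows "payoffA mu0 rho pp c s \<le> bnd mu0 rho pp c s"
  unfolding payoffA_def bnd_def Let_def
  apply (intro sum_mono)
  apply (rule mult_left_mono)
  using xhat_le[OF assms(1)] assms
  by (auto simp: U_def prior_def trans_def obsp_def ind_def)

lemma bnd_eq:
  assumes "\<not> st_e1 s"
  shows "bnd mu0 rho pp c s = pp*mu0*(1 - c*ind (st_e2 s (Some True)))
     + pp*(1-mu0)*((1-rho)*(if st_e2 s (Some False) then 1 else pp) - c*ind (st_e2 s (Some False)))
     + (1-pp)*((rho * mu0 + (1 - rho) * (1 - mu0))*(if st_e2 s None then 1 else pp) - c*ind (st_e2 s None))"
  using assms
  by (cases "st_e2 s (Some True)"; cases "st_e2 s (Some False)"; cases "st_e2 s None";
      simp add: bnd_def U_def UNIV_bool prior_def trans_def obsp_def signal_def ind_def Let_def algebra_simps)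




definition sopt :: strategy where
  "sopt = (False, (\<lambda>sg. sg), (\<lambda>sg. sg \<noteq> Some True),
     (\<lambda>sg1 sg2. if sg1 = Some True then (if sg2 = Some True then Some True else None) else sg2))"

lemma fin_strat: "finite (UNIV :: strategy set)"
  by simp

lemma sopt_ok: "feasible sopt" "\<not> st_e1 sopt"
  by (auto simp: sopt_def feasible_def feasible_report_def st_r1_def st_r2_def st_e1_def)

lemma sopt_val: "payoffA mu0 rho pp c sopt = pp*mu0 + pp*(1-mu0)*((1-rho) - c)
     + (1-pp)*((rho * mu0 + (1 - rho) * (1 - mu0)) - c)"
  by (simp add: payoffA_def sopt_def st_r1_def st_r2_def st_e1_def st_e2_def xhat_def
        UNIV_bool prior_def trans_def obsp_def signal_def ind_def Let_def algebra_simps)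

lemma dev_val: "payoffA mu0 rho pp c deviation = mu0*(1-c) + (1-mu0)*((1-rho) - 2*c)"
  by (simp add: payoffA_def deviation_def st_r1_def st_r2_def st_e1_def st_e2_def xhat_def
        UNIV_bool prior_def trans_def obsp_def signal_def ind_def Let_def algebra_simps)

theorem propositionC4:
  fixes mu0 rho pp c k :: real
  assumes "0 < mu0" "mu0 < 1"
    and "1/2 < rho" "rho < 1"
    and "0 < pp" "pp < 1"
    and "0 < c" "0 < k"
    and "1 - rho < k / (1 - pp)"
    and "k / (1 - pp) \<le> min (rho * mu0 + (1 - rho) * (1 - mu0))
                              (1 - (rho * mu0 + (1 - rho) * (1 - mu0)))"
    and "c / (1 - pp) \<le> 1 - rho"
  shows "payoffA mu0 rho pp c deviation >
           Max (payoffA mu0 rho pp c ` {s. feasible s \<and> \<not> st_e1 s})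
         \<longleftrightarrow> c / (1 - pp) < mu0 * (1 - rho) / (1 - mu0 * (1 - pp))"
proof -
  let ?m2 = "rho * mu0 + (1 - rho) * (1 - mu0)"
  let ?V = "pp*mu0 + pp*(1-mu0)*((1-rho) - c) + (1-pp)*(?m2 - c)"
  have cb: "c \<le> (1-rho)*(1-pp)" using assms(6,11) by (simp add: pos_divide_le_eq)
  have m2: "1 - rho \<le> ?m2"
  proof -
    have "?m2 - (1-rho) = mu0*(2*rho-1)" by (simp add: algebra_simps)
    also have "\<dots> \<ge> 0" using assms(1,3) by simp
    finally show ?thesis by simp
  qed
  have key: "\<And>q e. 1 - rho \<le> q \<Longrightarrow> q*(if e then 1 else pp) - c*ind e \<le> q - c"
  proof -
    fix q e assume q: "1 - rho \<le> q"
    have "c \<le> q*(1-pp)" using cb q assms(6) by (meson less_eq_real_def mult_right_mono order_trans diff_gt_0_iff_gt)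
    then show "q*(if e then 1 else pp) - c*ind e \<le> q - c"
      by (cases e) (auto simp: ind_def algebra_simps)
  qed
  have ub: "payoffA mu0 rho pp c s \<le> ?V" if "feasible s" "\<not> st_e1 s" for s
  proof -
    have "payoffA mu0 rho pp c s \<le> bnd mu0 rho pp c s"
      using payoff_le_bnd[OF that] assms by simp
    also have "\<dots> \<le> ?V"
      unfolding bnd_eq[OF that(2)]
    proof (intro add_mono)
      show "pp*mu0*(1 - c*ind (st_e2 s (Some True))) \<le> pp*mu0"
        using assms by (simp add: ind_def)
      show "pp*(1-mu0)*((1-rho)*(if st_e2 s (Some False) then 1 else pp) - c*ind (st_e2 s (Some False)))
           \<le> pp*(1-mu0)*((1-rho) - c)"
        by (rule mult_left_mono[OF key]) (use assms in auto)
      show "(1-pp)*(?m2*(if st_e2 s None then 1 else pp) - c*ind (st_e2 s None)) \<le> (1-pp)*(?m2 - c)"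
        by (rule mult_left_mono[OF key[OF m2]]) (use assms in auto)
    qed
    finally show ?thesis .
  qed
  have fin: "finite (payoffA mu0 rho pp c ` {s. feasible s \<and> \<not> st_e1 s})"
    using fin_strat by (simp add: finite_subset)
  have mx: "Max (payoffA mu0 rho pp c ` {s. feasible s \<and> \<not> st_e1 s}) = ?V"
    apply (rule Max_eqI[OF fin])
    using ub apply blast
    using sopt_ok sopt_val[of mu0 rho pp c] by (metis (mono_tags, lifting) image_eqI mem_Collect_eq)
  have d: "payoffA mu0 rho pp c deviation - ?V = (1-pp)*mu0*(1-rho) - c*(1 - mu0*(1-pp))"
    unfolding dev_val by (simp add: algebra_simps)
  have den: "0 < 1 - mu0*(1-pp)"
  proof -
    have "mu0*(1-pp) < 1*1" using assms(1,2,5,6) by (intro mult_strict_mono') auto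
    then show ?thesis by simp
  qed
  have "c / (1 - pp) < mu0 * (1 - rho) / (1 - mu0 * (1 - pp))
      \<longleftrightarrow> c * (1 - mu0*(1-pp)) < (1-pp)*mu0*(1-rho)"
  proof -
    have p: "0 < 1 - pp" using assms(6) by simp
    have "c / (1 - pp) < mu0 * (1 - rho) / (1 - mu0 * (1 - pp))
        \<longleftrightarrow> c < mu0 * (1 - rho) / (1 - mu0 * (1 - pp)) * (1 - pp)"
      by (rule pos_divide_less_eq[OF p])
    also have "\<dots> \<longleftrightarrow> c < (mu0 * (1 - rho) * (1 - pp)) / (1 - mu0 * (1 - pp))" by simp
    also have "\<dots> \<longleftrightarrow> c * (1 - mu0 * (1 - pp)) < mu0 * (1 - rho) * (1 - pp)"
      by (rule pos_less_divide_eq[OF den])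
    finally show ?thesis by (simp add: algebra_simps)
  qed
  then show ?thesis unfolding mx using d by linarith
qed

end
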